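(* Let $\mathbb{K}$ be a positive commutative monoid such that the inner consistency property holds for $\mathbb{K}$-relations via the northwest corner method. Let $R(X)$ and $S(Y)$ be two inner consistent $\mathbb{K}$-relations and let $W$ be a northwest corner join for $R$ and $S$. Then $|W'|\le|R'|+|S'|$, where $W',R',S'$ denote supports.
   Context: Positive: $p+q=0\Rightarrow p=q=0$. Canonical pre-order: $b\sqsubseteq c$ iff $b+a=c$ for some $a$. For a finite attribute set $X$ (attributes have domains), a $\mathbb{K}$-relation over $X$ is a finitely supported map $R$ from $X$-tuples to $K$, with support $R'=\{t:R(t)\ne0\}$; $t[Y]$ is restriction; marginals $R[Y](t)=\sum_{r\in R',r[Y]=t}R(r)$; $R(X),S(Y)$ are inner consistent if $R[X\cap Y]=S[X\cap Y]$. Northwest corner method on $b\in K^m$, $c\in K^n$ with $\sum b_i=\sum c_j$, producing $x_{ij}$: delete (setting to $0$) rows with $b_i=0$ and columns with $c_j=0$; if $m=1$ set $x_{1j}=c_j$; if $n=1$ set $x_{i1}=b_i$; otherwise if $b_1=c_1$ set $x_{11}=b_1$, rest of row 1 and column 1 to $0$, recurse on $(b_2..b_m),(c_2..c_n)$; else if $b_1\sqsubseteq c_1$ choose $a$ with $b_1+a=c_1$, set $x_{11}=b_1$, $x_{1j}=0$ ($j\ge2$), recurse on rows $2..m$ with $(b_2..b_m),(a,c_2..c_n)$; else if $c_1\sqsubseteq b_1$ symmetrically. A northwest corner join for inner consistent $R,S$ with $Z=X\cap Y$: for each $Z$-tuple $w$ in the support of $R[Z]$, enumerate in any order $u_1..u_p\in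 R'$ with $u_i[Z]=w$ and $v_1..v_q\in S'$ with $v_j[Z]=w$, run the method on $(R(u_i))_i,(S(v_j))_j$, and set $W(u_iv_j)=x_{ij}$; $W=0$ elsewhere. The inner consistency property holds via the northwest corner method if for any two inner consistent $\mathbb{K}$-relations the procedure can always be carried out and every resulting $W$ satisfies $W[X]=R$, $W[Y]=S$. *)

theory Defs
  imports Main
begin

definition tuples :: "('a \<Rightarrow> 'v set) \<Rightarrow> 'a set \<Rightarrow> ('a \<rightharpoonup> 'v) set" where
  "tuples D X = {t. dom t = X \<and> (\<forall>x\<in>X. the (t x) \<in> D x)}"

definition supp :: "('t \<Rightarrow> 'k::zero) \<Rightarrow> 't set" where
  "supp R = {t. R t \<noteq> 0}"

definition krel :: "('a \<Rightarrow> 'v set) \<Rightarrow> 'a set \<Rightarrow> (('a \<rightharpoonup> 'v) \<Rightarrow> 'k::zero) \<Rightarrow> bool" where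
  "krel D X R \<longleftrightarrow> finite (supp R) \<and> supp R \<subseteq> tuples D X"

definition marg :: "(('a \<rightharpoonup> 'v) \<Rightarrow> 'k::comm_monoid_add) \<Rightarrow> 'a set \<Rightarrow> ('a \<rightharpoonup> 'v) \<Rightarrow> 'k" where
  "marg R Y t = (\<Sum>r\<in>{r\<in>supp R. r |` Y = t}. R r)"

definition inner_cons :: "'a set \<Rightarrow> 'a set \<Rightarrow> (('a \<rightharpoonup> 'v) \<Rightarrow> 'k::comm_monoid_add)
    \<Rightarrow> (('a \<rightharpoonup> 'v) \<Rightarrow> 'k) \<Rightarrow> bool" where
  "inner_cons X Y R S \<longleftrightarrow> marg R (X \<inter> Y) = marg S (X \<inter> Y)"

definition kle :: "'k::comm_monoid_add \<Rightarrow> 'k \<Rightarrow> bool" where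
  "kle b c \<longleftrightarrow> (\<exists>a. b + a = c)"

text \<open>Rows and columns are lists of (original index, value) pairs. Each call of the
  method first deletes the zero rows/columns (nzf); the output matrix is a function
  on index pairs that is 0 at all entries not explicitly set.\<close>

definition nzf :: "(nat \<times> 'k::zero) list \<Rightarrow> (nat \<times> 'k) list" where
  "nzf xs = filter (\<lambda>p. snd p \<noteq> 0) xs"

definition enum :: "'k list \<Rightarrow> (nat \<times> 'k) list" where
  "enum xs = zip [0..<length xs] xs"

inductive nwc :: "(nat \<times> 'k::comm_monoid_add) list \<Rightarrow> (nat \<times> 'k) list \<Rightarrow> (nat \<times> nat \<Rightarrow> 'k) \<Rightarrow> bool"
where
  one_row: "nzf rs = [(i, v)] \<Longrightarrow>
     nwc rs cs (\<lambda>(i', j). if i' = i then (case map_of (nzf cs) j of Some w \<Rightarrow> w | None \<Rightarrow> 0) else 0)"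
| one_col: "nzf cs = [(j, w)] \<Longrightarrow> length (nzf rs) \<noteq> 1 \<Longrightarrow>
     nwc rs cs (\<lambda>(i, j'). if j' = j then (case map_of (nzf rs) i of Some v \<Rightarrow> v | None \<Rightarrow> 0) else 0)"
| eq: "nzf rs = (i, v) # B2 \<Longrightarrow> nzf cs = (j, w) # C2 \<Longrightarrow> B2 \<noteq> [] \<Longrightarrow> C2 \<noteq> [] \<Longrightarrow>
     v = w \<Longrightarrow> nwc B2 C2 x \<Longrightarrow> nwc rs cs (x((i, j) := v))"
| row_le: "nzf rs = (i, v) # B2 \<Longrightarrow> nzf cs = (j, w) # C2 \<Longrightarrow> B2 \<noteq> [] \<Longrightarrow> C2 \<noteq> [] \<Longrightarrow>
     v \<noteq> w \<Longrightarrow> v + a = w \<Longrightarrow> nwc B2 ((j, a) # C2) x \<Longrightarrow> nwc rs cs (x((i, j) := v))"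
| col_le: "nzf rs = (i, v) # B2 \<Longrightarrow> nzf cs = (j, w) # C2 \<Longrightarrow> B2 \<noteq> [] \<Longrightarrow> C2 \<noteq> [] \<Longrightarrow>
     v \<noteq> w \<Longrightarrow> \<not> kle v w \<Longrightarrow> w + a = v \<Longrightarrow> nwc ((i, a) # B2) C2 x \<Longrightarrow> nwc rs cs (x((i, j) := w))"

inductive nwc_step :: "(nat \<times> 'k::comm_monoid_add) list \<times> (nat \<times> 'k) list
    \<Rightarrow> (nat \<times> 'k) list \<times> (nat \<times> 'k) list \<Rightarrow> bool"
where
  "nzf rs = (i, v) # B2 \<Longrightarrow> nzf cs = (j, w) # C2 \<Longrightarrow> B2 \<noteq> [] \<Longrightarrow> C2 \<noteq> [] \<Longrightarrow>
     v = w \<Longrightarrow> nwc_step (rs, cs) (B2, C2)"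
| "nzf rs = (i, v) # B2 \<Longrightarrow> nzf cs = (j, w) # C2 \<Longrightarrow> B2 \<noteq> [] \<Longrightarrow> C2 \<noteq> [] \<Longrightarrow>
     v \<noteq> w \<Longrightarrow> v + a = w \<Longrightarrow> nwc_step (rs, cs) (B2, (j, a) # C2)"
| "nzf rs = (i, v) # B2 \<Longrightarrow> nzf cs = (j, w) # C2 \<Longrightarrow> B2 \<noteq> [] \<Longrightarrow> C2 \<noteq> [] \<Longrightarrow>
     v \<noteq> w \<Longrightarrow> \<not> kle v w \<Longrightarrow> w + a = v \<Longrightarrow> nwc_step (rs, cs) ((i, a) # B2, C2)"

definition nwc_stuck :: "(nat \<times> 'k::comm_monoid_add) list \<times> (nat \<times> 'k) list \<Rightarrow> bool" where
  "nwc_stuck s = (let B = nzf (fst s); C = nzf (snd s) in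
     \<not> (B = [] \<and> C = []) \<and> length B \<noteq> 1 \<and> length C \<noteq> 1 \<and>
     \<not> (B \<noteq> [] \<and> C \<noteq> [] \<and> (snd (hd B) = snd (hd C) \<or> kle (snd (hd B)) (snd (hd C))
                                \<or> kle (snd (hd C)) (snd (hd B)))))"

definition nwc_join :: "'a set \<Rightarrow> 'a set \<Rightarrow> (('a \<rightharpoonup> 'v) \<Rightarrow> 'k::comm_monoid_add)
    \<Rightarrow> (('a \<rightharpoonup> 'v) \<Rightarrow> 'k) \<Rightarrow> (('a \<rightharpoonup> 'v) \<Rightarrow> 'k) \<Rightarrow> bool" where
  "nwc_join X Y R S W \<longleftrightarrow> (let Z = X \<inter> Y in
     (\<exists>us vs xs.
        (\<forall>w\<in>supp (marg R Z).
           distinct (us w) \<and> set (us w) = {u\<in>supp R. u |` Z = w} \<and>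
           distinct (vs w) \<and> set (vs w) = {v\<in>supp S. v |` Z = w} \<and>
           nwc (enum (map R (us w))) (enum (map S (vs w))) (xs w) \<and>
           (\<forall>i<length (us w). \<forall>j<length (vs w). W ((us w ! i) ++ (vs w ! j)) = xs w (i, j))) \<and>
        (\<forall>t. (\<forall>w\<in>supp (marg R Z). \<forall>u\<in>supp R. \<forall>v\<in>supp S.
                 u |` Z = w \<longrightarrow> v |` Z = w \<longrightarrow> t \<noteq> u ++ v) \<longrightarrow> W t = 0)))"

text \<open>The inner consistency property via the northwest corner method (for attribute
  type 'a, value type 'v and monoid 'k): for any two inner consistent K-relations the
  procedure can always be carried out (no reachable state, for any enumeration order and
  any choices, is stuck) and every resulting W has marginals R and S.\<close>
definition nwc_icp :: "('a \<times> 'v \<times> 'k::comm_monoid_add) itself \<Rightarrow> bool" where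
  "nwc_icp _ \<longleftrightarrow> (\<forall>(D :: 'a \<Rightarrow> 'v set) X Y (R :: ('a \<rightharpoonup> 'v) \<Rightarrow> 'k) S.
     finite X \<and> finite Y \<and> krel D X R \<and> krel D Y S \<and> inner_cons X Y R S \<longrightarrow>
       (\<forall>w\<in>supp (marg R (X \<inter> Y)). \<forall>us vs.
           distinct us \<and> set us = {u\<in>supp R. u |` (X \<inter> Y) = w} \<and>
           distinct vs \<and> set vs = {v\<in>supp S. v |` (X \<inter> Y) = w} \<longrightarrow>
           (\<forall>s. nwc_step\<^sup>*\<^sup>* (enum (map R us), enum (map S vs)) s \<longrightarrow> \<not> nwc_stuck s)) \<and>
       (\<forall>W. nwc_join X Y R S W \<longrightarrow> marg W X = R \<and> marg W Y = S))"

end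

theory Submission
  imports Defs
begin

lemma nzf_len: "length (nzf xs) \<le> length xs"
  unfolding nzf_def by simp

lemma supp_upd: "supp (x(k := v)) \<subseteq> insert k (supp x)"
  unfolding supp_def by auto

lemma nwc_card:
  assumes "nwc rs cs x"
  shows "finite (supp x) \<and> card (supp x) \<le> length rs + length cs"
  using assms
proof (induction rule: nwc.induct)
  case (one_row rs i v cs)
  let ?x = "(\<lambda>(i', j). if i' = i then (case map_of (nzf cs) j of Some w \<Rightarrow> w | None \<Rightarrow> 0) else 0)"
  have sub: "supp ?x \<subseteq> (\<lambda>j. (i, j)) ` set (map fst (nzf cs))"
  proof
    fix p assume "p \<in> supp ?x"
    then obtain a b where p: "p = (a, b)" and "?x (a, b) \<noteq> 0" unfolding supp_def by (cases p) auto
    then have "a = i" and "map_of (nzf cs) b \<noteq> None" by (auto split: if_splits option.splits)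
    then show "p \<in> (\<lambda>j. (i, j)) ` set (map fst (nzf cs))" using p
      by (metis domIff dom_map_of_conv_image_fst image_eqI list.set_map)
  qed
  have "card (supp ?x) \<le> card ((\<lambda>j. (i, j)) ` set (map fst (nzf cs)))"
    by (rule card_mono[OF _ sub]) simp
  also have "\<dots> \<le> card (set (map fst (nzf cs)))" by (rule card_image_le) simp
  also have "\<dots> \<le> length (nzf cs)" by (metis card_length length_map)
  also have "\<dots> \<le> length cs" by (rule nzf_len)
  finally show ?case using finite_subset[OF sub] by simp
next
  case (one_col cs j w rs)
  let ?x = "(\<lambda>(i, j'). if j' = j then (case map_of (nzf rs) i of Some v \<Rightarrow> v | None \<Rightarrow> 0) else 0)"
  have sub: "supp ?x \<subseteq> (\<lambda>i. (i, j)) ` set (map fst (nzf rs))"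
  proof
    fix p assume "p \<in> supp ?x"
    then obtain a b where p: "p = (a, b)" and "?x (a, b) \<noteq> 0" unfolding supp_def by (cases p) auto
    then have "b = j" and "map_of (nzf rs) a \<noteq> None" by (auto split: if_splits option.splits)
    then show "p \<in> (\<lambda>i. (i, j)) ` set (map fst (nzf rs))" using p
      by (metis domIff dom_map_of_conv_image_fst image_eqI list.set_map)
  qed
  have "card (supp ?x) \<le> card ((\<lambda>i. (i, j)) ` set (map fst (nzf rs)))"
    by (rule card_mono[OF _ sub]) simp
  also have "\<dots> \<le> card (set (map fst (nzf rs)))" by (rule card_image_le) simp
  also have "\<dots> \<le> length (nzf rs)" by (metis card_length length_map)
  also have "\<dots> \<le> length rs" by (rule nzf_len)
  finally show ?case using finite_subset[OF sub] by simp
next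
  case (eq rs i v B2 cs j w C2 x)
  have f: "finite (supp (x((i, j) := v)))" using eq.IH by (meson finite_insert finite_subset supp_upd)
  have "card (supp (x((i, j) := v))) \<le> card (insert (i,j) (supp x))"
    using eq.IH by (intro card_mono[OF _ supp_upd]) simp
  also have "\<dots> \<le> Suc (card (supp x))" using eq.IH by (simp add: card_insert_if)
  also have "\<dots> \<le> Suc (length B2 + length C2)" using eq.IH by simp
  also have "\<dots> \<le> length rs + length cs"
    using nzf_len[of rs] nzf_len[of cs] eq(1,2) by simp
  finally show ?case using f by blast
next
  case (row_le rs i v B2 cs j w C2 a x)
  have f: "finite (supp (x((i, j) := v)))" using row_le.IH by (meson finite_insert finite_subset supp_upd)
  have "card (supp (x((i, j) := v))) \<le> card (insert (i,j) (supp x))"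
    using row_le.IH by (intro card_mono[OF _ supp_upd]) simp
  also have "\<dots> \<le> Suc (card (supp x))" using row_le.IH by (simp add: card_insert_if)
  also have "\<dots> \<le> Suc (length B2 + Suc (length C2))" using row_le.IH by simp
  also have "\<dots> \<le> length rs + length cs"
    using nzf_len[of rs] nzf_len[of cs] row_le(1,2) by simp
  finally show ?case using f by blast
next
  case (col_le rs i v B2 cs j w C2 a x)
  have f: "finite (supp (x((i, j) := w)))" using col_le.IH by (meson finite_insert finite_subset supp_upd)
  have "card (supp (x((i, j) := w))) \<le> card (insert (i,j) (supp x))"
    using col_le.IH by (intro card_mono[OF _ supp_upd]) simp
  also have "\<dots> \<le> Suc (card (supp x))" using col_le.IH by (simp add: card_insert_if)
  also have "\<dots> \<le> Suc (Suc (length B2) + length C2)" using col_le.IH by simp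
  also have "\<dots> \<le> length rs + length cs"
    using nzf_len[of rs] nzf_len[of cs] col_le(1,2) by simp
  finally show ?case using f by blast
qed

lemma fiber_sum:
  assumes "finite F" "finite A"
  shows "(\<Sum>w\<in>A. card {u\<in>F. f u = w}) \<le> card F"
proof -
  have "(\<Sum>w\<in>A. card {u\<in>F. f u = w}) = card (\<Union>w\<in>A. {u\<in>F. f u = w})"
    using assms by (intro card_UN_disjoint[symmetric]) auto
  also have "\<dots> \<le> card F" using assms by (intro card_mono) auto
  finally show ?thesis .
qed

theorem proposition25:
  fixes D :: "'a \<Rightarrow> 'v set" and X Y :: "'a set"
    and R S W :: "('a \<rightharpoonup> 'v) \<Rightarrow> 'k::comm_monoid_add"
  assumes positive: "\<forall>p q :: 'k. p + q = 0 \<longrightarrow> p = 0 \<and> q = 0"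
    and icp: "nwc_icp TYPE('a \<times> 'v \<times> 'k)"
    and "finite X" and "finite Y"
    and "krel D X R" and "krel D Y S"
    and "inner_cons X Y R S"
    and "nwc_join X Y R S W"
  shows "card (supp W) \<le> card (supp R) + card (supp S)"
proof -
  define Z where "Z = X \<inter> Y"
  obtain us vs xs where
    A: "\<forall>w\<in>supp (marg R Z).
           distinct (us w) \<and> set (us w) = {u\<in>supp R. u |` Z = w} \<and>
           distinct (vs w) \<and> set (vs w) = {v\<in>supp S. v |` Z = w} \<and>
           nwc (enum (map R (us w))) (enum (map S (vs w))) (xs w) \<and>
           (\<forall>i<length (us w). \<forall>j<length (vs w). W ((us w ! i) ++ (vs w ! j)) = xs w (i, j))"
    and B: "\<forall>t. (\<forall>w\<in>supp (marg R Z). \<forall>u\<in>supp R. \<forall>v\<in>supp S.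
                 u |` Z = w \<longrightarrow> v |` Z = w \<longrightarrow> t \<noteq> u ++ v) \<longrightarrow> W t = 0"
    using assms(8) unfolding nwc_join_def Z_def Let_def by blast
  have fR: "finite (supp R)" using assms(5) unfolding krel_def by (rule conjunct1)
  have fS: "finite (supp S)" using assms(6) unfolding krel_def by (rule conjunct1)
  let ?M = "supp (marg R Z)"
  have fM: "finite ?M"
  proof (rule finite_subset[OF _ finite_imageI[OF fR, of "\<lambda>r. r |` Z"]])
    show "?M \<subseteq> (\<lambda>r. r |` Z) ` supp R"
    proof
      fix t assume "t \<in> ?M"
      then have "marg R Z t \<noteq> 0" unfolding supp_def by simp
      then have "{r\<in>supp R. r |` Z = t} \<noteq> {}" unfolding marg_def by force
      then show "t \<in> (\<lambda>r. r |` Z) ` supp R" by blast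
    qed
  qed
  let ?G = "\<lambda>w. (\<lambda>(i, j). (us w ! i) ++ (vs w ! j)) ` supp (xs w)"
  have sub: "supp W \<subseteq> (\<Union>w\<in>?M. ?G w)"
  proof
    fix t assume t: "t \<in> supp W"
    then have "W t \<noteq> 0" unfolding supp_def by simp
    then obtain w u v where w: "w \<in> ?M" and u: "u \<in> supp R" "u |` Z = w"
      and v: "v \<in> supp S" "v |` Z = w" and tuv: "t = u ++ v" using B by metis
    have "u \<in> set (us w)" using bspec[OF A w] u by simp
    then obtain i where i: "i < length (us w)" "us w ! i = u" by (metis in_set_conv_nth)
    have "v \<in> set (vs w)" using bspec[OF A w] v by simp
    then obtain j where j: "j < length (vs w)" "vs w ! j = v" by (metis in_set_conv_nth)
    have "W ((us w ! i) ++ (vs w ! j)) = xs w (i, j)" using bspec[OF A w] i(1) j(1) by blast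
    then have "W t = xs w (i, j)" using i j tuv by simp
    then have "(i, j) \<in> supp (xs w)" using \<open>W t \<noteq> 0\<close> unfolding supp_def by simp
    moreover have "t = (\<lambda>(i, j). (us w ! i) ++ (vs w ! j)) (i, j)" using i j tuv by simp
    ultimately have "t \<in> ?G w" by (rule rev_image_eqI)
    then show "t \<in> (\<Union>w\<in>?M. ?G w)" using w by blast
  qed
  have cG: "finite (?G w) \<and> card (?G w) \<le> length (us w) + length (vs w)" if "w \<in> ?M" for w
  proof -
    have n: "nwc (enum (map R (us w))) (enum (map S (vs w))) (xs w)" using bspec[OF A that] by simp
    from nwc_card[OF n] have "finite (supp (xs w))"
      "card (supp (xs w)) \<le> length (us w) + length (vs w)"
      by (auto simp: enum_def)
    then show ?thesis using card_image_le[of "supp (xs w)" "(\<lambda>(i, j). (us w ! i) ++ (vs w ! j))"]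
      finite_imageI[of "supp (xs w)" "(\<lambda>(i, j). (us w ! i) ++ (vs w ! j))"] by linarith
  qed
  have lu: "length (us w) = card {u\<in>supp R. u |` Z = w}" if "w \<in> ?M" for w
  proof -
    have "distinct (us w)" "set (us w) = {u\<in>supp R. u |` Z = w}" using bspec[OF A that] by simp_all
    then show ?thesis by (simp add: distinct_card[symmetric])
  qed
  have lv: "length (vs w) = card {v\<in>supp S. v |` Z = w}" if "w \<in> ?M" for w
  proof -
    have "distinct (vs w)" "set (vs w) = {v\<in>supp S. v |` Z = w}" using bspec[OF A that] by simp_all
    then show ?thesis by (simp add: distinct_card[symmetric])
  qed
  have "card (supp W) \<le> card (\<Union>w\<in>?M. ?G w)"
    using sub fM cG by (intro card_mono[OF _ sub] finite_UN_I) simp_all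
  also have "\<dots> \<le> (\<Sum>w\<in>?M. card (?G w))" by (rule card_UN_le[OF fM])
  also have "\<dots> \<le> (\<Sum>w\<in>?M. card {u\<in>supp R. u |` Z = w} + card {v\<in>supp S. v |` Z = w})"
    using cG lu lv by (intro sum_mono) simp
  also have "\<dots> = (\<Sum>w\<in>?M. card {u\<in>supp R. u |` Z = w}) + (\<Sum>w\<in>?M. card {v\<in>supp S. v |` Z = w})"
    by (rule sum.distrib)
  also have "\<dots> \<le> card (supp R) + card (supp S)"
    using fiber_sum[OF fR fM] fiber_sum[OF fS fM] by (rule add_mono)
  finally show ?thesis .
qed

end
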